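(* Let $(C,\Delta,\delta)$ be a coalgebra. Suppose there are a constant $R>0$, a linear functional $\psi\in\mathbf{L}(C,\mathbb{C})$ and a family $(f^{(\mu)})_{\mu\in M}$ of functions $r\mapsto f^{(\mu)}_r=\delta+r\psi+\mathfrak{R}^{(\mu)}_r\in\mathbf{L}(C,\mathbb{C})$ on $\mathbb{R}_+$ such that for every $c\in C$ there is a constant $D_c>0$, not depending on $\mu$, with $|\mathfrak{R}^{(\mu)}_r(c)|\le r^2D_c$ for all $\mu\in M$ and all $r\le R$. Then for every $c\in C$ there exist constants $C_c>0$ and $\Psi_c>0$ such that for all intervals $[s,t]\subset\mathbb{R}_+$, all partitions $\alpha=\{s=t_0<t_1<\dots<t_n=t\}$ ($n\in\mathbb{N}$) of $[s,t]$ with $\|\alpha\|\le R$, and every choice of $\mu_1,\dots,\mu_n\in M$, $$\big|f^{(\mu_1)}_{t_1-t_0}\star\cdots\star f^{(\mu_n)}_{t_n-t_{n-1}}(c)-e_\star^{(t-s)\psi}(c)\big|\le\|\alpha\|(t-s)\,e^{(t-s)\max(\Psi_c,C_c)}\,\frac{C_c^2+\Psi_c^2e^{\|\alpha\|\Psi_c}}{2}.$$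
   Context: $\mathbf{L}(C,\mathbb{C})$ denotes the linear functionals on $C$, with convolution $f\star g:=(f\otimes g)\circ\Delta$. For $\psi\in\mathbf{L}(C,\mathbb{C})$, $e_\star^{\psi}(c):=\sum_{n\ge0}\psi^{\star n}(c)/n!$ with $\psi^{\star0}=\delta$; this series converges for every $c\in C$. For a partition $\alpha=\{s=t_0<\dots<t_n=t\}$, $\|\alpha\|:=\max_j(t_{j+1}-t_j)$. *)

theory Defs
  imports "HOL-Analysis.Analysis"
begin

text \<open>The coproduct
  Delta c, an element of C (x) C, is given by a chosen finite Sweedler representation
  Delta c = sum of a_i (x) b_i, i.e. a list of pairs (a_i, b_i).\<close>

type_synonym 'c coprod = "'c \<Rightarrow> ('c \<times> 'c) list"

definition lin_fun :: "(complex \<Rightarrow> 'c::ab_group_add \<Rightarrow> 'c) \<Rightarrow> ('c \<Rightarrow> complex) \<Rightarrow> bool" where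
  "lin_fun scl f \<longleftrightarrow> Vector_Spaces.linear scl ((*) :: complex \<Rightarrow> complex \<Rightarrow> complex) f"

definition conv :: "'c coprod \<Rightarrow> ('c \<Rightarrow> complex) \<Rightarrow> ('c \<Rightarrow> complex) \<Rightarrow> 'c \<Rightarrow> complex" where
  "conv Delta f g c = (\<Sum>(a, b) \<leftarrow> Delta c. f a * g b)"

text \<open>Linearity of Delta and coassociativity are equalities in
  C (x) C resp. C (x) C (x) C; since the pure functionals f (x) g (resp. f (x) g (x) h)
  with f,g,h linear separate points of these tensor products, they are expressed by
  testing against such functionals.\<close>
definition coalgebra :: "(complex \<Rightarrow> 'c::ab_group_add \<Rightarrow> 'c) \<Rightarrow> 'c coprod \<Rightarrow> ('c \<Rightarrow> complex) \<Rightarrow> bool" where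
  "coalgebra scl Delta delta \<longleftrightarrow>
     vector_space scl \<and> lin_fun scl delta \<and>
     (\<forall>f g. lin_fun scl f \<longrightarrow> lin_fun scl g \<longrightarrow> lin_fun scl (conv Delta f g)) \<and>
     (\<forall>f g h. lin_fun scl f \<longrightarrow> lin_fun scl g \<longrightarrow> lin_fun scl h \<longrightarrow>
        conv Delta (conv Delta f g) h = conv Delta f (conv Delta g h)) \<and>
     (\<forall>c. (\<Sum>(a, b) \<leftarrow> Delta c. scl (delta a) b) = c) \<and>
     (\<forall>c. (\<Sum>(a, b) \<leftarrow> Delta c. scl (delta b) a) = c)"

definition conv_list :: "'c coprod \<Rightarrow> ('c \<Rightarrow> complex) \<Rightarrow> ('c \<Rightarrow> complex) list \<Rightarrow> 'c \<Rightarrow> complex" where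
  "conv_list Delta delta gs = foldr (conv Delta) gs delta"

primrec conv_pow :: "'c coprod \<Rightarrow> ('c \<Rightarrow> complex) \<Rightarrow> ('c \<Rightarrow> complex) \<Rightarrow> nat \<Rightarrow> 'c \<Rightarrow> complex" where
  "conv_pow Delta delta psi 0 = delta"
| "conv_pow Delta delta psi (Suc n) = conv Delta psi (conv_pow Delta delta psi n)"

definition conv_exp :: "'c coprod \<Rightarrow> ('c \<Rightarrow> complex) \<Rightarrow> ('c \<Rightarrow> complex) \<Rightarrow> 'c \<Rightarrow> complex" where
  "conv_exp Delta delta psi c = (\<Sum>n. conv_pow Delta delta psi n c / fact n)"

definition mesh :: "nat \<Rightarrow> (nat \<Rightarrow> real) \<Rightarrow> real" where
  "mesh n t = Max (insert 0 ((\<lambda>j. t (Suc j) - t j) ` {..<n}))"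

end

theory Submission
  imports Defs
begin


lemma vs_complex: "vector_space ((*) :: complex \<Rightarrow> complex \<Rightarrow> complex)"
  by (simp add: vector_space_def algebra_simps)

lemma lin_fun_iff:
  assumes "vector_space scl"
  shows "lin_fun scl f \<longleftrightarrow> (\<forall>x y. f (x+y) = f x + f y) \<and> (\<forall>a x. f (scl a x) = a * f x)"
  using assms vs_complex unfolding lin_fun_def Vector_Spaces.linear_iff by simp

lemma conv_nth:
  "conv Delta F G x = (\<Sum>i<length (Delta x). F (fst (Delta x ! i)) * G (snd (Delta x ! i)))"
  unfolding conv_def by (simp add: sum_list_sum_nth atLeast0LessThan case_prod_beta)

locale coal =
  fixes scl :: "complex \<Rightarrow> 'c::ab_group_add \<Rightarrow> 'c" and Delta :: "'c coprod" and delta :: "'c \<Rightarrow> complex"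
  assumes coalg: "coalgebra scl Delta delta"
begin

lemma vs: "vector_space scl" using coalg by (simp add: coalgebra_def)

abbreviation L where "L f \<equiv> lin_fun scl f"

lemma L_iff: "L f \<longleftrightarrow> (\<forall>x y. f (x+y) = f x + f y) \<and> (\<forall>a x. f (scl a x) = a * f x)"
  using lin_fun_iff[OF vs] .

lemma L_add: "L f \<Longrightarrow> f (x + y) = f x + f y" by (simp add: L_iff)
lemma L_scale: "L f \<Longrightarrow> f (scl a x) = a * f x" by (simp add: L_iff)
lemma L_zero: "L f \<Longrightarrow> f 0 = 0"
  using L_add[of f 0 0] by simp

lemma L_delta: "L delta" using coalg by (simp add: coalgebra_def)
lemma L_conv: "L f \<Longrightarrow> L g \<Longrightarrow> L (conv Delta f g)" using coalg by (simp add: coalgebra_def)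
lemma assoc: "L f \<Longrightarrow> L g \<Longrightarrow> L h \<Longrightarrow> conv Delta (conv Delta f g) h = conv Delta f (conv Delta g h)"
  using coalg by (simp add: coalgebra_def)

lemma L_lin: "L f \<Longrightarrow> L g \<Longrightarrow> L (\<lambda>x. a * f x + b * g x)"
  by (simp add: L_iff algebra_simps)

lemma L_diff: "L f \<Longrightarrow> L g \<Longrightarrow> L (\<lambda>x. f x - g x)"
  by (simp add: L_iff algebra_simps)
lemma L_plus: "L f \<Longrightarrow> L g \<Longrightarrow> L (\<lambda>x. f x + g x)"
  by (simp add: L_iff algebra_simps)
lemma L_cmult: "L f \<Longrightarrow> L (\<lambda>x. a * f x)"
  by (simp add: L_iff algebra_simps)
lemma L_0: "L (\<lambda>x. 0)"
  by (simp add: L_iff)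

lemma L_sum: "finite J \<Longrightarrow> (\<And>j. j \<in> J \<Longrightarrow> L (g j)) \<Longrightarrow> L (\<lambda>x. \<Sum>j\<in>J. g j x)"
proof (induction J rule: finite_induct)
  case empty then show ?case by (simp add: L_0)
next
  case (insert a F) then show ?case using L_plus[of "g a" "\<lambda>x. \<Sum>j\<in>F. g j x"] by simp
qed

lemma L_sum_list: "L F \<Longrightarrow> F (sum_list (map g xs)) = sum_list (map (\<lambda>x. F (g x)) xs)"
  by (induction xs) (simp_all add: L_zero L_add)

lemma counit_l: assumes "L F" shows "conv Delta delta F c = F c"
proof -
  have "F c = F (\<Sum>(a, b) \<leftarrow> Delta c. scl (delta a) b)" using coalg by (simp add: coalgebra_def)
  also have "\<dots> = (\<Sum>(a, b) \<leftarrow> Delta c. delta a * F b)"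
    unfolding L_sum_list[OF assms] by (rule arg_cong[where f=sum_list], rule map_cong) (auto simp: L_scale[OF assms])
  finally show ?thesis by (simp add: conv_def)
qed

lemma counit_r: assumes "L F" shows "conv Delta F delta c = F c"
proof -
  have "F c = F (\<Sum>(a, b) \<leftarrow> Delta c. scl (delta b) a)" using coalg by (simp add: coalgebra_def)
  also have "\<dots> = (\<Sum>(a, b) \<leftarrow> Delta c. F a * delta b)"
    unfolding L_sum_list[OF assms] by (rule arg_cong[where f=sum_list], rule map_cong) (auto simp: L_scale[OF assms] mult.commute)
  finally show ?thesis by (simp add: conv_def)
qed

end


context coal begin

lemma rep:
  obtains J H where "J \<subseteq> {..<length (Delta x)}" "\<forall>j\<in>J. L (H j)"
    "\<forall>j\<in>J. \<forall>l\<in>J. H j (fst (Delta x ! l)) = (if j = l then 1 else 0)"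
    "\<forall>G. L G \<longrightarrow> (\<forall>i<length (Delta x). G (fst (Delta x ! i)) =
        (\<Sum>j\<in>J. G (fst (Delta x ! j)) * H j (fst (Delta x ! i))))"
proof -
  define k where "k = length (Delta x)"
  define a where "a i = fst (Delta x ! i)" for i
  define P where "P J \<longleftrightarrow> J \<subseteq> {..<k} \<and> (\<forall>G. L G \<longrightarrow> (\<forall>j\<in>J. G (a j) = 0) \<longrightarrow> (\<forall>i<k. G (a i) = 0))" for J
  have "P {..<k}" by (simp add: P_def)
  then obtain J where PJ: "P J" and minJ: "\<And>J'. P J' \<Longrightarrow> card J \<le> card J'"
    using ex_has_least_nat[of P "{..<k}" card] by blast
  have finJ: "finite J" using PJ unfolding P_def using finite_subset by blast
  have "\<forall>j\<in>J. \<exists>h. L h \<and> h (a j) = 1 \<and> (\<forall>l\<in>J. l \<noteq> j \<longrightarrow> h (a l) = 0)"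
  proof
    fix j assume jJ: "j \<in> J"
    have "card (J - {j}) < card J" using finJ jJ by (meson card_Diff1_less)
    hence "\<not> P (J - {j})" using minJ by fastforce
    moreover have "J - {j} \<subseteq> {..<k}" using PJ by (auto simp: P_def)
    ultimately obtain G i where G: "L G" "\<forall>l\<in>J - {j}. G (a l) = 0" "i < k" "G (a i) \<noteq> 0"
      unfolding P_def by blast
    have Gj: "G (a j) \<noteq> 0"
    proof
      assume "G (a j) = 0"
      hence "\<forall>l\<in>J. G (a l) = 0" using G(2) by blast
      thus False using PJ G unfolding P_def by blast
    qed
    show "\<exists>h. L h \<and> h (a j) = 1 \<and> (\<forall>l\<in>J. l \<noteq> j \<longrightarrow> h (a l) = 0)"
      apply (rule exI[of _ "\<lambda>y. inverse (G (a j)) * G y"])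
      using G Gj by (auto simp: L_cmult)
  qed
  then obtain H where H: "\<forall>j\<in>J. L (H j) \<and> H j (a j) = 1 \<and> (\<forall>l\<in>J. l \<noteq> j \<longrightarrow> H j (a l) = 0)"
    by metis
  have H1: "\<forall>j\<in>J. \<forall>l\<in>J. H j (a l) = (if j = l then 1 else 0)" using H by auto
  have exp: "\<forall>G. L G \<longrightarrow> (\<forall>i<k. G (a i) = (\<Sum>j\<in>J. G (a j) * H j (a i)))"
  proof (intro allI impI)
    fix G i assume G: "L G" and i: "i < k"
    define G' where "G' y = G y - (\<Sum>j\<in>J. G (a j) * H j y)" for y
    have "L (\<lambda>y. \<Sum>j\<in>J. G (a j) * H j y)"
      by (rule L_sum[OF finJ]) (use H in \<open>auto intro: L_cmult\<close>)
    hence LG': "L G'" unfolding G'_def[abs_def] using G by (rule L_diff[rotated])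
    have "\<forall>l\<in>J. G' (a l) = 0"
    proof
      fix l assume l: "l \<in> J"
      have "(\<Sum>j\<in>J. G (a j) * H j (a l)) = (\<Sum>j\<in>J. if j = l then G (a j) else 0)"
        by (rule sum.cong) (use H1 l in auto)
      also have "\<dots> = G (a l)" using finJ l by simp
      finally show "G' (a l) = 0" by (simp add: G'_def)
    qed
    hence "G' (a i) = 0" using PJ LG' i unfolding P_def by blast
    thus "G (a i) = (\<Sum>j\<in>J. G (a j) * H j (a i))" by (simp add: G'_def)
  qed
  show ?thesis
    apply (rule that[of J H])
    using PJ H1 exp H unfolding P_def k_def a_def by auto
qed

end



lemma conv_diff2: "conv D F (\<lambda>y. G1 y - G2 y) x = conv D F G1 x - conv D F G2 x"
  by (simp add: conv_nth algebra_simps sum_subtractf)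
lemma conv_add2: "conv D F (\<lambda>y. G1 y + G2 y) x = conv D F G1 x + conv D F G2 x"
  by (simp add: conv_nth algebra_simps sum.distrib)
lemma conv_cmult2: "conv D F (\<lambda>y. c * G y) x = c * conv D F G x"
  by (simp add: conv_nth algebra_simps sum_distrib_left)
lemma conv_diff1: "conv D (\<lambda>y. G1 y - G2 y) F x = conv D G1 F x - conv D G2 F x"
  by (simp add: conv_nth algebra_simps sum_subtractf)
lemma conv_add1: "conv D (\<lambda>y. G1 y + G2 y) F x = conv D G1 F x + conv D G2 F x"
  by (simp add: conv_nth algebra_simps sum.distrib)
lemma conv_cmult1: "conv D (\<lambda>y. c * G y) F x = c * conv D G F x"
  by (simp add: conv_nth algebra_simps sum_distrib_left)

lemma conv_bound:
  assumes "\<And>i. i < length (D y) \<Longrightarrow> cmod (X (snd (D y ! i))) \<le> \<rho> * Dg (snd (D y ! i))"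
  shows "cmod (conv D F X y) \<le> \<rho> * (\<Sum>i<length (D y). cmod (F (fst (D y ! i))) * Dg (snd (D y ! i)))"
proof -
  have "cmod (conv D F X y) \<le> (\<Sum>i<length (D y). cmod (F (fst (D y ! i)) * X (snd (D y ! i))))"
    unfolding conv_nth by (rule norm_sum)
  also have "\<dots> \<le> (\<Sum>i<length (D y). \<rho> * (cmod (F (fst (D y ! i))) * Dg (snd (D y ! i))))"
  proof (rule sum_mono)
    fix i assume i: "i \<in> {..<length (D y)}"
    have "cmod (F (fst (D y ! i))) * cmod (X (snd (D y ! i))) \<le> cmod (F (fst (D y ! i))) * (\<rho> * Dg (snd (D y ! i)))"
      by (rule mult_left_mono[OF assms]) (use i in simp_all)
    then show "cmod (F (fst (D y ! i)) * X (snd (D y ! i))) \<le> \<rho> * (cmod (F (fst (D y ! i))) * Dg (snd (D y ! i)))"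
      by (simp add: norm_mult mult.left_commute)
  qed
  finally show ?thesis by (simp add: sum_distrib_left)
qed

context coal begin

abbreviation fa where "fa x l \<equiv> fst (Delta x ! l)"

definition isrep where
  "isrep x J H \<longleftrightarrow> J \<subseteq> {..<length (Delta x)} \<and> (\<forall>j\<in>J. L (H j)) \<and>
    (\<forall>j\<in>J. \<forall>l\<in>J. H j (fa x l) = (if j = l then 1 else 0)) \<and>
    (\<forall>G. L G \<longrightarrow> (\<forall>i<length (Delta x). G (fa x i) = (\<Sum>j\<in>J. G (fa x j) * H j (fa x i))))"

lemma rep_ex: "\<exists>J H. isrep x J H"
proof -
  obtain J H where "J \<subseteq> {..<length (Delta x)}" "\<forall>j\<in>J. L (H j)"
    "\<forall>j\<in>J. \<forall>l\<in>J. H j (fa x l) = (if j = l then 1 else 0)"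
    "\<forall>G. L G \<longrightarrow> (\<forall>i<length (Delta x). G (fa x i) = (\<Sum>j\<in>J. G (fa x j) * H j (fa x i)))"
    by (rule rep)
  then have "isrep x J H" unfolding isrep_def by (intro conjI)
  then show ?thesis by blast
qed

lemma isrep_fin: "isrep x J H \<Longrightarrow> finite J"
  unfolding isrep_def using finite_subset by blast

lemma isrep_exp: "isrep x J H \<Longrightarrow> L G \<Longrightarrow> i < length (Delta x) \<Longrightarrow>
   G (fa x i) = (\<Sum>j\<in>J. G (fa x j) * H j (fa x i))"
  unfolding isrep_def by blast
lemma isrep_delta: "isrep x J H \<Longrightarrow> j \<in> J \<Longrightarrow> l \<in> J \<Longrightarrow> H j (fa x l) = (if j = l then 1 else 0)"
  unfolding isrep_def by blast
lemma isrep_L: "isrep x J H \<Longrightarrow> j \<in> J \<Longrightarrow> L (H j)"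
  unfolding isrep_def by blast

lemma K1:
  assumes r: "isrep x J H" and K: "L K" and G: "L G" and j: "j \<in> J"
  shows "conv Delta (H j) (conv Delta K G) x = (\<Sum>l\<in>J. conv Delta (H j) K (fa x l) * conv Delta (H l) G x)"
proof -
  have Hj: "L (H j)" using isrep_L[OF r j] .
  have LX: "L (conv Delta (H j) K)" using L_conv[OF Hj K] .
  have "conv Delta (H j) (conv Delta K G) x = conv Delta (conv Delta (H j) K) G x"
    using assoc[OF Hj K G] by simp
  also have "\<dots> = (\<Sum>i<length (Delta x). (\<Sum>l\<in>J. conv Delta (H j) K (fa x l) * H l (fa x i)) * G (snd (Delta x ! i)))"
    unfolding conv_nth[of Delta "conv Delta (H j) K"]
  proof (intro sum.cong refl)
    fix i assume "i \<in> {..<length (Delta x)}"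
    then have "conv Delta (H j) K (fa x i) = (\<Sum>l\<in>J. conv Delta (H j) K (fa x l) * H l (fa x i))"
      using isrep_exp[OF r LX] by simp
    then show "conv Delta (H j) K (fa x i) * G (snd (Delta x ! i)) = (\<Sum>l\<in>J. conv Delta (H j) K (fa x l) * H l (fa x i)) * G (snd (Delta x ! i))"
      by simp
  qed
  also have "\<dots> = (\<Sum>l\<in>J. conv Delta (H j) K (fa x l) * (\<Sum>i<length (Delta x). H l (fa x i) * G (snd (Delta x ! i))))"
    by (simp only: sum_distrib_left sum_distrib_right mult.assoc) (rule sum.swap)
  also have "\<dots> = (\<Sum>l\<in>J. conv Delta (H j) K (fa x l) * conv Delta (H l) G x)"
    by (simp add: conv_nth[of Delta "H _" G x])
  finally show ?thesis .
qed

lemma K2: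
  assumes r: "isrep x J H" and F: "L F"
  shows "F x = (\<Sum>j\<in>J. delta (fa x j) * conv Delta (H j) F x)"
proof -
  have "F x = conv Delta delta F x" using counit_l[OF F] by simp
  also have "\<dots> = (\<Sum>i<length (Delta x). (\<Sum>j\<in>J. delta (fa x j) * H j (fa x i)) * F (snd (Delta x ! i)))"
    unfolding conv_nth[of Delta delta]
  proof (intro sum.cong refl)
    fix i assume "i \<in> {..<length (Delta x)}"
    then have "delta (fa x i) = (\<Sum>j\<in>J. delta (fa x j) * H j (fa x i))"
      using isrep_exp[OF r L_delta] by simp
    then show "delta (fa x i) * F (snd (Delta x ! i)) = (\<Sum>j\<in>J. delta (fa x j) * H j (fa x i)) * F (snd (Delta x ! i))"
      by simp
  qed
  also have "\<dots> = (\<Sum>j\<in>J. delta (fa x j) * (\<Sum>i<length (Delta x). H j (fa x i) * F (snd (Delta x ! i))))"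
    by (simp only: sum_distrib_left sum_distrib_right mult.assoc) (rule sum.swap)
  also have "\<dots> = (\<Sum>j\<in>J. delta (fa x j) * conv Delta (H j) F x)"
    by (simp add: conv_nth[of Delta "H _" F x])
  finally show ?thesis .
qed

lemma K3:
  assumes r: "isrep x J H" and "j \<in> J" "l \<in> J"
  shows "conv Delta (H j) delta (fa x l) = (if j = l then 1 else 0)"
  using counit_r[OF isrep_L[OF r assms(2)]] isrep_delta[OF r assms(2,3)] by simp

definition nu where "nu x J H G = (\<Sum>j\<in>J. cmod (conv Delta (H j) G x))"

lemma nu_nonneg: "nu x J H G \<ge> 0" unfolding nu_def by (simp add: sum_nonneg)

lemma nu_add: "nu x J H (\<lambda>y. G1 y + G2 y) \<le> nu x J H G1 + nu x J H G2"
  unfolding nu_def conv_add2 sum.distrib[symmetric] by (rule sum_mono) (rule norm_triangle_ineq)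

lemma K4:
  assumes r: "isrep x J H" and K: "L K" and G: "L G"
    and b: "\<And>l. l \<in> J \<Longrightarrow> (\<Sum>j\<in>J. cmod (conv Delta (H j) K (fa x l))) \<le> \<beta>"
  shows "nu x J H (conv Delta K G) \<le> \<beta> * nu x J H G"
proof -
  have fin: "finite J" using isrep_fin[OF r] .
  have "nu x J H (conv Delta K G) = (\<Sum>j\<in>J. cmod (\<Sum>l\<in>J. conv Delta (H j) K (fa x l) * conv Delta (H l) G x))"
    unfolding nu_def using K1[OF r K G] by simp
  also have "\<dots> \<le> (\<Sum>j\<in>J. \<Sum>l\<in>J. cmod (conv Delta (H j) K (fa x l)) * cmod (conv Delta (H l) G x))"
    by (rule sum_mono) (rule order_trans[OF norm_sum], simp add: norm_mult)
  also have "\<dots> = (\<Sum>l\<in>J. (\<Sum>j\<in>J. cmod (conv Delta (H j) K (fa x l))) * cmod (conv Delta (H l) G x))"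
    by (subst sum.swap) (simp add: sum_distrib_right)
  also have "\<dots> \<le> (\<Sum>l\<in>J. \<beta> * cmod (conv Delta (H l) G x))"
    by (rule sum_mono) (rule mult_right_mono[OF b], auto)
  finally show ?thesis by (simp add: nu_def sum_distrib_left)
qed

lemma K5:
  assumes r: "isrep x J H" and F: "L F"
  shows "cmod (F x) \<le> (\<Sum>j\<in>J. cmod (delta (fa x j))) * nu x J H F"
proof -
  have "cmod (F x) \<le> (\<Sum>j\<in>J. cmod (delta (fa x j)) * cmod (conv Delta (H j) F x))"
    using K2[OF r F] by (metis (no_types, lifting) norm_mult norm_sum sum.cong)
  also have "\<dots> \<le> (\<Sum>j\<in>J. cmod (delta (fa x j)) * nu x J H F)"
  proof (rule sum_mono, rule mult_left_mono)
    fix j assume "j \<in> J"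
    then show "cmod (conv Delta (H j) F x) \<le> nu x J H F"
      unfolding nu_def using isrep_fin[OF r]
      by (intro member_le_sum) auto
  qed auto
  finally show ?thesis by (simp add: sum_distrib_right)
qed

end



lemma rexp_sums: "(\<lambda>n. (x::real)^n / fact n) sums exp x"
  using exp_converges[of x] by (simp add: divide_inverse mult.commute)

lemma rexp_summable: "summable (\<lambda>n. (x::real)^n / fact n)"
  using rexp_sums sums_summable by blast

lemma rexp_suminf: "(\<Sum>n. (x::real)^n / fact n) = exp x"
  using rexp_sums sums_unique by (metis)

locale coalp = coal +
  fixes psi
  assumes psi_lin: "L psi"
begin

abbreviation pw where "pw n \<equiv> conv_pow Delta delta psi n"

lemma L_pw: "L (pw n)"
  by (induction n) (simp_all add: L_delta L_conv psi_lin)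

lemma pw_add: "conv Delta (pw p) (pw q) = pw (p + q)"
proof (induction p)
  case 0 show ?case using counit_l[OF L_pw] by (simp add: fun_eq_iff)
next
  case (Suc p)
  have "conv Delta (pw (Suc p)) (pw q) = conv Delta psi (conv Delta (pw p) (pw q))"
    using assoc[OF psi_lin L_pw L_pw] by simp
  then show ?case using Suc by simp
qed

lemma pw_one: "pw 1 = psi"
  using counit_r[OF psi_lin] by (simp add: fun_eq_iff)

lemma growth: "\<exists>A \<Lambda>. A \<ge> 0 \<and> \<Lambda> \<ge> 0 \<and> (\<forall>n. cmod (pw n x) \<le> A * \<Lambda> ^ n)"
proof -
  obtain J H where r: "isrep x J H" using rep_ex by blast
  have fin: "finite J" using isrep_fin[OF r] .
  define \<beta> where "\<beta> = (\<Sum>l\<in>J. \<Sum>j\<in>J. cmod (conv Delta (H j) psi (fa x l)))"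
  have b: "(\<Sum>j\<in>J. cmod (conv Delta (H j) psi (fa x l))) \<le> \<beta>" if "l \<in> J" for l
    unfolding \<beta>_def using fin that
    by (intro member_le_sum[where f="\<lambda>l. \<Sum>j\<in>J. cmod (conv Delta (H j) psi (fa x l))"]) (auto intro!: sum_nonneg)
  have b0: "\<beta> \<ge> 0" unfolding \<beta>_def by (auto intro!: sum_nonneg)
  have nu: "nu x J H (pw n) \<le> \<beta> ^ n * nu x J H delta" for n
  proof (induction n)
    case 0 show ?case by simp
  next
    case (Suc n)
    have "nu x J H (pw (Suc n)) \<le> \<beta> * nu x J H (pw n)"
      using K4[OF r psi_lin L_pw b] by simp
    also have "\<dots> \<le> \<beta> * (\<beta> ^ n * nu x J H delta)"
      using Suc b0 by (rule mult_left_mono)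
    finally show ?case by (simp add: mult.assoc)
  qed
  define Kx where "Kx = (\<Sum>j\<in>J. cmod (delta (fa x j)))"
  have Kx0: "Kx \<ge> 0" unfolding Kx_def by (auto intro!: sum_nonneg)
  have "cmod (pw n x) \<le> (Kx * nu x J H delta) * \<beta> ^ n" for n
  proof -
    have "cmod (pw n x) \<le> Kx * nu x J H (pw n)" using K5[OF r L_pw] by (simp add: Kx_def)
    also have "\<dots> \<le> Kx * (\<beta> ^ n * nu x J H delta)" using nu Kx0 by (rule mult_left_mono)
    finally show ?thesis by (simp add: ac_simps)
  qed
  then show ?thesis using b0 Kx0 nu_nonneg[of x J H delta]
    by (metis mult_nonneg_nonneg)
qed

definition E where "E \<tau> y = (\<Sum>n. complex_of_real \<tau> ^ n * pw n y / fact n)"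

lemma conv_pow_scale: "conv_pow Delta delta (\<lambda>y. c * psi y) n = (\<lambda>y. c ^ n * pw n y)"
proof (induction n)
  case 0 show ?case by simp
next
  case (Suc n) show ?case
    by (simp only: conv_pow.simps Suc.IH) (simp add: fun_eq_iff conv_cmult1 conv_cmult2)
qed

lemma conv_exp_E: "conv_exp Delta delta (\<lambda>x. complex_of_real \<tau> * psi x) = E \<tau>"
  by (simp add: fun_eq_iff conv_exp_def E_def conv_pow_scale)

lemma E_term_bound:
  assumes "\<And>n. cmod (pw n y) \<le> A * \<Lambda> ^ n" "\<Lambda> \<ge> 0"
  shows "norm (complex_of_real \<tau> ^ n * pw n y / fact n) \<le> A * ((\<bar>\<tau>\<bar> * \<Lambda>) ^ n / fact n)"
proof -
  have "norm (complex_of_real \<tau> ^ n * pw n y / fact n) = \<bar>\<tau>\<bar> ^ n * cmod (pw n y) / fact n"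
    by (simp add: norm_mult norm_divide norm_power)
  also have "\<dots> \<le> \<bar>\<tau>\<bar> ^ n * (A * \<Lambda> ^ n) / fact n"
    by (intro divide_right_mono mult_left_mono assms) auto
  finally show ?thesis by (simp add: power_mult_distrib ac_simps)
qed

lemma E_summable:
  assumes "\<And>n. cmod (pw n y) \<le> A * \<Lambda> ^ n" "\<Lambda> \<ge> 0"
  shows "summable (\<lambda>n. norm (complex_of_real \<tau> ^ n * pw n y / fact n))"
  by (rule summable_comparison_test'[OF summable_mult[OF rexp_summable], of 0])
     (use E_term_bound[OF assms] in simp)

lemma E_summable': "summable (\<lambda>n. norm (complex_of_real \<tau> ^ n * pw n y / fact n))"
proof -
  obtain A \<Lambda> where "A \<ge> 0" "\<Lambda> \<ge> 0" "\<And>n. cmod (pw n y) \<le> A * \<Lambda> ^ n"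
    using growth[of y] by blast
  then show ?thesis using E_summable by blast
qed

lemma E_summable0: "summable (\<lambda>n. complex_of_real \<tau> ^ n * pw n y / fact n)"
  by (rule summable_norm_cancel[OF E_summable'])

lemma E_bound:
  assumes "\<And>n. cmod (pw n y) \<le> A * \<Lambda> ^ n" "\<Lambda> \<ge> 0"
  shows "cmod (E \<tau> y) \<le> A * exp (\<bar>\<tau>\<bar> * \<Lambda>)"
proof -
  have "cmod (E \<tau> y) \<le> (\<Sum>n. A * ((\<bar>\<tau>\<bar> * \<Lambda>) ^ n / fact n))"
    unfolding E_def by (rule norm_suminf_le[OF E_term_bound[OF assms] summable_mult[OF rexp_summable]])
  also have "\<dots> = A * exp (\<bar>\<tau>\<bar> * \<Lambda>)"
    by (simp only: suminf_mult[OF rexp_summable] rexp_suminf)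
  finally show ?thesis .
qed

lemma E_zero: "E 0 = delta"
proof
  fix y
  have "(\<lambda>n. complex_of_real 0 ^ n * pw n y / fact n) sums (\<Sum>n<1. complex_of_real 0 ^ n * pw n y / fact n)"
    by (rule sums_finite) auto
  then show "E 0 y = delta y" unfolding E_def by (simp add: sums_iff)
qed

lemma E_lin: "L (E \<tau>)"
  unfolding L_iff
proof (intro conjI allI)
  fix a b
  have "E \<tau> (a + b) = (\<Sum>n. complex_of_real \<tau> ^ n * pw n a / fact n + complex_of_real \<tau> ^ n * pw n b / fact n)"
    unfolding E_def using L_add[OF L_pw] by (simp add: algebra_simps add_divide_distrib)
  also have "\<dots> = E \<tau> a + E \<tau> b" unfolding E_def
    by (rule suminf_add[OF E_summable0 E_summable0, symmetric])
  finally show "E \<tau> (a + b) = E \<tau> a + E \<tau> b" .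
next
  fix c a
  have "E \<tau> (scl c a) = (\<Sum>n. c * (complex_of_real \<tau> ^ n * pw n a / fact n))"
    unfolding E_def using L_scale[OF L_pw] by (simp add: algebra_simps)
  also have "\<dots> = c * E \<tau> a" unfolding E_def by (rule suminf_mult[OF E_summable0])
  finally show "E \<tau> (scl c a) = c * E \<tau> a" .
qed

end


context coalp begin

lemma E_rem:
  assumes g: "\<And>n. cmod (pw n y) \<le> A * \<Lambda> ^ n" and A: "A \<ge> 0" and La: "\<Lambda> \<ge> 0" and r: "r \<ge> 0"
  shows "cmod (E r y - delta y - complex_of_real r * psi y) \<le> r\<^sup>2 * (A * \<Lambda>\<^sup>2 * exp (r * \<Lambda>) / 2)"
proof -
  define t where "t n = complex_of_real r ^ n * pw n y / fact n" for n
  have "E r y = (\<Sum>n. t (n + 2)) + (\<Sum>i<2. t i)"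
    unfolding E_def t_def[symmetric] by (rule suminf_split_initial_segment) (simp add: t_def E_summable0)
  moreover have "(\<Sum>i<2. t i) = delta y + complex_of_real r * psi y"
    by (simp add: t_def numeral_2_eq_2 counit_r[OF psi_lin])
  ultimately have eq: "E r y - delta y - complex_of_real r * psi y = (\<Sum>n. t (n + 2))" by simp
  have tb: "norm (t (n + 2)) \<le> A * (r * \<Lambda>)\<^sup>2 / 2 * ((r * \<Lambda>) ^ n / fact n)" for n
  proof -
    have "norm (t (n + 2)) \<le> A * ((\<bar>r\<bar> * \<Lambda>) ^ (n + 2) / fact (n + 2))"
      unfolding t_def by (rule E_term_bound[OF g La])
    also have "\<dots> = A * ((r * \<Lambda>) ^ n * (r * \<Lambda>)\<^sup>2 / fact (n + 2))" using r by (simp add: power_add power2_eq_square)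
    also have "\<dots> \<le> A * ((r * \<Lambda>) ^ n * (r * \<Lambda>)\<^sup>2 / (2 * fact n))"
    proof -
      have f: "2 * (fact n :: real) \<le> fact (n + 2)"
      proof -
        have "fact (n + 2) = (real n + 2) * ((real n + 1) * fact n)"
          by (simp add: fact_Suc algebra_simps numeral_2_eq_2)
        moreover have "(real n + 2) * ((real n + 1) * fact n) \<ge> 2 * (1 * fact n)"
          by (intro mult_mono) auto
        ultimately show ?thesis by simp
      qed
      show ?thesis using A r La f
        by (intro mult_left_mono divide_left_mono) (auto intro!: mult_pos_pos)
    qed
    also have "\<dots> = A * (r * \<Lambda>)\<^sup>2 / 2 * ((r * \<Lambda>) ^ n / fact n)" by (simp add: field_simps)
    finally show ?thesis .
  qed
  have "cmod (\<Sum>n. t (n + 2)) \<le> (\<Sum>n. A * (r * \<Lambda>)\<^sup>2 / 2 * ((r * \<Lambda>) ^ n / fact n))"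
    by (rule norm_suminf_le[OF tb summable_mult[OF rexp_summable]])
  also have "\<dots> = A * (r * \<Lambda>)\<^sup>2 / 2 * exp (r * \<Lambda>)"
    by (simp only: suminf_mult[OF rexp_summable] rexp_suminf)
  also have "\<dots> = r\<^sup>2 * (A * \<Lambda>\<^sup>2 * exp (r * \<Lambda>) / 2)" by (simp add: power_mult_distrib)
  finally show ?thesis using eq by simp
qed

lemma E_semi: "E (a + b) y = conv Delta (E a) (E b) y"
proof -
  define k where "k = length (Delta y)"
  define u where "u i = fst (Delta y ! i)" for i
  define v where "v i = snd (Delta y ! i)" for i
  define \<alpha> where "\<alpha> = complex_of_real a"
  define \<beta> where "\<beta> = complex_of_real b"
  define T where "T i n = (\<Sum>p\<le>n. (\<alpha> ^ p * pw p (u i) / fact p) * (\<beta> ^ (n - p) * pw (n - p) (v i) / fact (n - p)))" for i n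
  have cs: "(\<lambda>n. T i n) sums (E a (u i) * E b (v i))" for i
    unfolding T_def E_def \<alpha>_def \<beta>_def by (rule Cauchy_product_sums[OF E_summable' E_summable'])
  have "conv Delta (E a) (E b) y = (\<Sum>i<k. E a (u i) * E b (v i))"
    by (simp add: conv_nth k_def u_def v_def)
  also have "\<dots> = (\<Sum>i<k. \<Sum>n. T i n)" using cs by (simp add: sums_iff)
  also have "\<dots> = (\<Sum>n. \<Sum>i<k. T i n)"
    by (rule suminf_sum[symmetric]) (use cs sums_summable in blast)
  also have "\<dots> = (\<Sum>n. complex_of_real (a + b) ^ n * pw n y / fact n)"
  proof (rule arg_cong[where f=suminf], rule ext)
    fix n
    have step: "(\<Sum>i<k. (\<alpha> ^ p * pw p (u i) / fact p) * (\<beta> ^ (n - p) * pw (n - p) (v i) / fact (n - p)))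
        = of_nat (n choose p) * \<alpha> ^ p * \<beta> ^ (n - p) / fact n * pw n y" if p: "p \<le> n" for p
    proof -
      have "(\<Sum>i<k. (\<alpha> ^ p * pw p (u i) / fact p) * (\<beta> ^ (n - p) * pw (n - p) (v i) / fact (n - p)))
          = \<alpha> ^ p * \<beta> ^ (n - p) / (fact p * fact (n - p)) * (\<Sum>i<k. pw p (u i) * pw (n - p) (v i))"
        by (simp add: sum_distrib_left field_simps)
      also have "(\<Sum>i<k. pw p (u i) * pw (n - p) (v i)) = conv Delta (pw p) (pw (n - p)) y"
        by (simp add: conv_nth k_def u_def v_def)
      also have "\<dots> = pw n y" using pw_add[of p "n - p"] p by simp
      also have "\<alpha> ^ p * \<beta> ^ (n - p) / (fact p * fact (n - p)) = of_nat (n choose p) * \<alpha> ^ p * \<beta> ^ (n - p) / fact n"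
        using binomial_fact[OF p, where 'a=complex] by (simp add: field_simps)
      finally show ?thesis .
    qed
    have "(\<Sum>i<k. T i n) = (\<Sum>p\<le>n. \<Sum>i<k. (\<alpha> ^ p * pw p (u i) / fact p) * (\<beta> ^ (n - p) * pw (n - p) (v i) / fact (n - p)))"
      unfolding T_def by (rule sum.swap)
    also have "\<dots> = (\<Sum>p\<le>n. of_nat (n choose p) * \<alpha> ^ p * \<beta> ^ (n - p) / fact n * pw n y)"
      by (rule sum.cong[OF refl], rule step) simp
    also have "\<dots> = (\<Sum>p\<le>n. of_nat (n choose p) * \<alpha> ^ p * \<beta> ^ (n - p)) / fact n * pw n y"
      by (simp add: sum_divide_distrib sum_distrib_right)
    also have "\<dots> = (\<alpha> + \<beta>) ^ n / fact n * pw n y" by (simp add: binomial_ring)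
    finally show "(\<Sum>i<k. T i n) = complex_of_real (a + b) ^ n * pw n y / fact n"
      by (simp add: \<alpha>_def \<beta>_def)
  qed
  also have "\<dots> = E (a + b) y" by (simp add: E_def)
  finally show ?thesis by simp
qed

end


context coalp begin

definition Wt where
  "Wt c J H Dg = (\<Sum>l\<in>J. \<Sum>j\<in>J. \<Sum>i<length (Delta (fa c l)).
      cmod (H j (fst (Delta (fa c l) ! i))) * Dg (snd (Delta (fa c l) ! i)))"

lemma Wt_nonneg: "(\<And>y. Dg y \<ge> 0) \<Longrightarrow> Wt c J H Dg \<ge> 0"
  unfolding Wt_def by (intro sum_nonneg mult_nonneg_nonneg) auto

lemma colbound:
  assumes r: "isrep c J H" and X: "\<And>y. cmod (X y) \<le> \<rho> * Dg y" and D: "\<And>y. Dg y \<ge> 0"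
    and rho: "\<rho> \<ge> 0" and l: "l \<in> J"
  shows "(\<Sum>j\<in>J. cmod (conv Delta (H j) X (fa c l))) \<le> \<rho> * Wt c J H Dg"
proof -
  define inner where "inner j l = (\<Sum>i<length (Delta (fa c l)).
      cmod (H j (fst (Delta (fa c l) ! i))) * Dg (snd (Delta (fa c l) ! i)))" for j l
  have fin: "finite J" using isrep_fin[OF r] .
  have "(\<Sum>j\<in>J. cmod (conv Delta (H j) X (fa c l))) \<le> (\<Sum>j\<in>J. \<rho> * inner j l)"
    unfolding inner_def by (rule sum_mono, rule conv_bound) (rule X)
  also have "\<dots> = \<rho> * (\<Sum>j\<in>J. inner j l)" by (simp add: sum_distrib_left)
  also have "\<dots> \<le> \<rho> * (\<Sum>l\<in>J. \<Sum>j\<in>J. inner j l)"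
    using fin l D by (intro mult_left_mono rho member_le_sum[where f="\<lambda>l. \<Sum>j\<in>J. inner j l"])
      (auto simp: inner_def intro!: sum_nonneg mult_nonneg_nonneg)
  finally show ?thesis by (simp add: Wt_def inner_def)
qed

lemma conv_list_L: "(\<forall>g\<in>set gs. L g) \<Longrightarrow> L (conv_list Delta delta gs)"
  by (induction gs) (simp_all add: conv_list_def L_delta L_conv)

lemma conv_list_Cons: "conv_list Delta delta (g # gs) = conv Delta g (conv_list Delta delta gs)"
  by (simp add: conv_list_def)

end


context coalp begin

lemma tri3:
  assumes "0 \<le> \<rho>"
  shows "cmod (a + complex_of_real \<rho> * b + c) \<le> cmod a + \<rho> * cmod b + cmod c"
proof -
  have 1: "cmod (a + complex_of_real \<rho> * b + c) \<le> cmod (a + complex_of_real \<rho> * b) + cmod c"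
    by (rule norm_triangle_ineq)
  have 2: "cmod (a + complex_of_real \<rho> * b) \<le> cmod a + cmod (complex_of_real \<rho> * b)"
    by (rule norm_triangle_ineq)
  show ?thesis using 1 2 assms by (simp add: norm_mult)
qed

lemma main:
  fixes M :: "'m set" and f :: "'m \<Rightarrow> real \<Rightarrow> 'a \<Rightarrow> complex"
  assumes R_pos: "R > 0"
    and f_lin: "\<And>\<mu> r. \<mu> \<in> M \<Longrightarrow> r \<ge> 0 \<Longrightarrow> L (f \<mu> r)"
    and remainder: "\<And>c. \<exists>D > 0. \<forall>\<mu>\<in>M. \<forall>r. 0 \<le> r \<longrightarrow> r \<le> R \<longrightarrow>
                      cmod (f \<mu> r c - delta c - complex_of_real r * psi c) \<le> r\<^sup>2 * D"
  shows "\<exists>Cc > 0. \<exists>Psi > 0. \<forall>s t n (tt :: nat \<Rightarrow> real) (mu :: nat \<Rightarrow> 'm).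
           0 \<le> s \<longrightarrow> s \<le> t \<longrightarrow> tt 0 = s \<longrightarrow> tt n = t \<longrightarrow>
           (\<forall>j<n. tt j < tt (Suc j)) \<longrightarrow> mesh n tt \<le> R \<longrightarrow>
           (\<forall>j\<in>{1..n}. mu j \<in> M) \<longrightarrow>
           cmod (conv_list Delta delta
                   (map (\<lambda>j. f (mu (Suc j)) (tt (Suc j) - tt j)) [0..<n]) c
                 - conv_exp Delta delta (\<lambda>x. complex_of_real (t - s) * psi x) c)
           \<le> mesh n tt * (t - s) * exp ((t - s) * max Psi Cc)
              * (Cc\<^sup>2 + Psi\<^sup>2 * exp (mesh n tt * Psi)) / 2"
proof -
  have "\<forall>y. \<exists>D. D > 0 \<and> (\<forall>\<mu>\<in>M. \<forall>r. 0 \<le> r \<longrightarrow> r \<le> R \<longrightarrow>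
                      cmod (f \<mu> r y - delta y - complex_of_real r * psi y) \<le> r\<^sup>2 * D)"
    using remainder by blast
  then obtain Df where Df: "\<And>y. Df y > 0"
    "\<And>y \<mu> r. \<mu> \<in> M \<Longrightarrow> 0 \<le> r \<Longrightarrow> r \<le> R \<Longrightarrow> cmod (f \<mu> r y - delta y - complex_of_real r * psi y) \<le> r\<^sup>2 * Df y"
    by metis
  have "\<forall>y. \<exists>A \<Lambda>. A \<ge> 0 \<and> \<Lambda> \<ge> 0 \<and> (\<forall>n. cmod (pw n y) \<le> A * \<Lambda> ^ n)"
    using growth by blast
  then obtain Ag Lg where Ag: "\<And>y. Ag y \<ge> 0" "\<And>y. Lg y \<ge> 0" "\<And>y n. cmod (pw n y) \<le> Ag y * Lg y ^ n"
    by metis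
  define DE where "DE y = Ag y * (Lg y)\<^sup>2 * exp (R * Lg y) / 2" for y
  have DE0: "DE y \<ge> 0" for y using Ag by (simp add: DE_def)
  have Erem: "cmod (E r y - delta y - complex_of_real r * psi y) \<le> r\<^sup>2 * DE y" if "0 \<le> r" "r \<le> R" for r y
  proof -
    have "cmod (E r y - delta y - complex_of_real r * psi y) \<le> r\<^sup>2 * (Ag y * (Lg y)\<^sup>2 * exp (r * Lg y) / 2)"
      by (rule E_rem[OF Ag(3) Ag(1) Ag(2) that(1)])
    also have "\<dots> \<le> r\<^sup>2 * DE y" unfolding DE_def using that Ag
      by (intro mult_left_mono divide_right_mono mult_nonneg_nonneg) (auto intro!: mult_right_mono)
    finally show ?thesis .
  qed
  obtain J H where r: "isrep c J H" using rep_ex by blast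
  have fin: "finite J" using isrep_fin[OF r] .
  define Wpsi where "Wpsi = Wt c J H (\<lambda>y. cmod (psi y))"
  define W1 where "W1 = Wt c J H Df"
  define W3 where "W3 = Wt c J H (\<lambda>y. Df y + DE y)"
  have Wpsi0: "Wpsi \<ge> 0" unfolding Wpsi_def by (rule Wt_nonneg) simp
  have W10: "W1 \<ge> 0" unfolding W1_def by (rule Wt_nonneg) (use Df(1) less_imp_le in blast)
  have W30: "W3 \<ge> 0" unfolding W3_def by (rule Wt_nonneg) (use Df(1) DE0 in \<open>auto intro: add_nonneg_nonneg less_imp_le\<close>)
  define \<Lambda>1 where "\<Lambda>1 = Wpsi + R * W1"
  define k where "k = length (Delta c)"
  define \<Lambda>2 where "\<Lambda>2 = (\<Sum>i<k. Lg (snd (Delta c ! i)))"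
  define K2 where "K2 = (\<Sum>j\<in>J. \<Sum>i<k. cmod (H j (fst (Delta c ! i))) * Ag (snd (Delta c ! i)))"
  define Kc where "Kc = (\<Sum>j\<in>J. cmod (delta (fa c j)))"
  define \<Lambda> where "\<Lambda> = max \<Lambda>1 \<Lambda>2"
  have K20: "K2 \<ge> 0" unfolding K2_def using Ag by (intro sum_nonneg mult_nonneg_nonneg) auto
  have Kc0: "Kc \<ge> 0" unfolding Kc_def by (intro sum_nonneg) auto
  have L20: "\<Lambda>2 \<ge> 0" unfolding \<Lambda>2_def using Ag by (intro sum_nonneg) auto
  have colf: "(\<Sum>j\<in>J. cmod (conv Delta (H j) (f \<mu> \<rho>) (fa c l))) \<le> exp (\<rho> * \<Lambda>1)"
    if mu: "\<mu> \<in> M" and rho: "0 \<le> \<rho>" "\<rho> \<le> R" and l: "l \<in> J" for \<mu> \<rho> l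
  proof -
    define Rm where "Rm y = f \<mu> \<rho> y - delta y - complex_of_real \<rho> * psi y" for y
    have fe: "f \<mu> \<rho> = (\<lambda>y. (delta y + complex_of_real \<rho> * psi y) + Rm y)" by (simp add: Rm_def fun_eq_iff)
    have "(\<Sum>j\<in>J. cmod (conv Delta (H j) (f \<mu> \<rho>) (fa c l)))
        \<le> (\<Sum>j\<in>J. cmod (conv Delta (H j) delta (fa c l)) + \<rho> * cmod (conv Delta (H j) psi (fa c l))
               + cmod (conv Delta (H j) Rm (fa c l)))"
    proof (rule sum_mono)
      fix j
      show "cmod (conv Delta (H j) (f \<mu> \<rho>) (fa c l)) \<le> cmod (conv Delta (H j) delta (fa c l))
          + \<rho> * cmod (conv Delta (H j) psi (fa c l)) + cmod (conv Delta (H j) Rm (fa c l))"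
        unfolding fe conv_add2 conv_cmult2 by (rule tri3[OF rho(1)])
    qed
    also have "\<dots> = (\<Sum>j\<in>J. cmod (conv Delta (H j) delta (fa c l))) + \<rho> * (\<Sum>j\<in>J. cmod (conv Delta (H j) psi (fa c l)))
               + (\<Sum>j\<in>J. cmod (conv Delta (H j) Rm (fa c l)))"
      by (simp add: sum.distrib sum_distrib_left)
    finally have s0: "(\<Sum>j\<in>J. cmod (conv Delta (H j) (f \<mu> \<rho>) (fa c l))) \<le> (\<Sum>j\<in>J. cmod (conv Delta (H j) delta (fa c l))) + \<rho> * (\<Sum>j\<in>J. cmod (conv Delta (H j) psi (fa c l)))
               + (\<Sum>j\<in>J. cmod (conv Delta (H j) Rm (fa c l)))" .
    have s1: "(\<Sum>j\<in>J. cmod (conv Delta (H j) delta (fa c l))) = 1"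
    proof -
      have "(\<Sum>j\<in>J. cmod (conv Delta (H j) delta (fa c l))) = (\<Sum>j\<in>J. if j = l then 1 else 0)"
        by (rule sum.cong) (use K3[OF r _ l] in auto)
      then show ?thesis using fin l by simp
    qed
    have s2: "(\<Sum>j\<in>J. cmod (conv Delta (H j) psi (fa c l))) \<le> 1 * Wpsi"
      unfolding Wpsi_def by (rule colbound[OF r _ _ _ l]) auto
    have s2': "\<rho> * (\<Sum>j\<in>J. cmod (conv Delta (H j) psi (fa c l))) \<le> \<rho> * Wpsi"
      using mult_left_mono[OF s2 rho(1)] by simp
    have s3: "(\<Sum>j\<in>J. cmod (conv Delta (H j) Rm (fa c l))) \<le> \<rho>\<^sup>2 * W1"
      unfolding W1_def by (rule colbound[OF r _ _ _ l]) (use Df mu rho in \<open>auto simp: Rm_def less_imp_le\<close>)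
    have "(\<Sum>j\<in>J. cmod (conv Delta (H j) (f \<mu> \<rho>) (fa c l))) \<le> 1 + \<rho> * Wpsi + \<rho>\<^sup>2 * W1"
      using s0 s1 s2' s3 by linarith
    also have "\<dots> \<le> 1 + \<rho> * \<Lambda>1"
    proof -
      have "\<rho>\<^sup>2 * W1 \<le> \<rho> * (R * W1)" using rho W10
        by (simp add: power2_eq_square mult.assoc mult_left_mono mult_right_mono)
      then show ?thesis by (simp add: \<Lambda>1_def distrib_left)
    qed
    also have "\<dots> \<le> exp (\<rho> * \<Lambda>1)" by (rule exp_ge_add_one_self)
    finally show ?thesis .
  qed
  have colfE: "(\<Sum>j\<in>J. cmod (conv Delta (H j) (\<lambda>y. f \<mu> \<rho> y - E \<rho> y) (fa c l))) \<le> \<rho>\<^sup>2 * W3"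
    if mu: "\<mu> \<in> M" and rho: "0 \<le> \<rho>" "\<rho> \<le> R" and l: "l \<in> J" for \<mu> \<rho> l
    unfolding W3_def
  proof (rule colbound[OF r _ _ _ l])
    fix y
    have "cmod (f \<mu> \<rho> y - E \<rho> y) \<le> cmod (f \<mu> \<rho> y - delta y - complex_of_real \<rho> * psi y)
        + cmod (E \<rho> y - delta y - complex_of_real \<rho> * psi y)"
      using norm_triangle_ineq4[of "f \<mu> \<rho> y - delta y - complex_of_real \<rho> * psi y"
          "E \<rho> y - delta y - complex_of_real \<rho> * psi y"] by simp
    also have "\<dots> \<le> \<rho>\<^sup>2 * Df y + \<rho>\<^sup>2 * DE y" by (intro add_mono Df(2) Erem mu rho)
    finally show "cmod (f \<mu> \<rho> y - E \<rho> y) \<le> \<rho>\<^sup>2 * (Df y + DE y)" by (simp add: distrib_left)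
  qed (use Df(1) DE0 in \<open>auto intro: add_nonneg_nonneg less_imp_le\<close>)
  have nuE: "nu c J H (E \<tau>) \<le> K2 * exp (\<tau> * \<Lambda>2)" if tau: "\<tau> \<ge> 0" for \<tau>
  proof -
    have "nu c J H (E \<tau>) \<le> (\<Sum>j\<in>J. exp (\<tau> * \<Lambda>2) * (\<Sum>i<k. cmod (H j (fst (Delta c ! i))) * Ag (snd (Delta c ! i))))"
      unfolding nu_def k_def
    proof (rule sum_mono, rule conv_bound)
      fix j i assume i: "i < length (Delta c)"
      have "cmod (E \<tau> (snd (Delta c ! i))) \<le> Ag (snd (Delta c ! i)) * exp (\<bar>\<tau>\<bar> * Lg (snd (Delta c ! i)))"
        by (rule E_bound[OF Ag(3) Ag(2)])
      also have "\<dots> \<le> Ag (snd (Delta c ! i)) * exp (\<tau> * \<Lambda>2)"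
      proof (intro mult_left_mono Ag(1))
        have "Lg (snd (Delta c ! i)) \<le> \<Lambda>2" unfolding \<Lambda>2_def k_def
          using i Ag(2) by (intro member_le_sum[where f="\<lambda>i. Lg (snd (Delta c ! i))"]) auto
        then show "exp (\<bar>\<tau>\<bar> * Lg (snd (Delta c ! i))) \<le> exp (\<tau> * \<Lambda>2)"
          using tau by (simp add: mult_left_mono)
      qed
      finally show "cmod (E \<tau> (snd (Delta c ! i))) \<le> exp (\<tau> * \<Lambda>2) * Ag (snd (Delta c ! i))"
        by (simp add: mult.commute)
    qed
    also have "\<dots> = K2 * exp (\<tau> * \<Lambda>2)" by (simp add: K2_def sum_distrib_left mult.commute)
    finally show ?thesis .
  qed
  define Cc where "Cc = Kc * W3 * K2 * 2 + \<Lambda> + 1"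
  have L0: "\<Lambda> \<ge> 0" using L20 by (simp add: \<Lambda>_def)
  have Cc1: "Cc \<ge> 1" using Kc0 W30 K20 L0 by (simp add: Cc_def)
  show ?thesis
  proof (rule exI[of _ Cc], intro conjI)
    show "Cc > 0" using Cc1 by simp
  next
    show "\<exists>Psi>0. \<forall>s t n (tt :: nat \<Rightarrow> real) (mu :: nat \<Rightarrow> 'm).
           0 \<le> s \<longrightarrow> s \<le> t \<longrightarrow> tt 0 = s \<longrightarrow> tt n = t \<longrightarrow>
           (\<forall>j<n. tt j < tt (Suc j)) \<longrightarrow> mesh n tt \<le> R \<longrightarrow>
           (\<forall>j\<in>{1..n}. mu j \<in> M) \<longrightarrow>
           cmod (conv_list Delta delta
                   (map (\<lambda>j. f (mu (Suc j)) (tt (Suc j) - tt j)) [0..<n]) c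
                 - conv_exp Delta delta (\<lambda>x. complex_of_real (t - s) * psi x) c)
           \<le> mesh n tt * (t - s) * exp ((t - s) * max Psi Cc)
              * (Cc\<^sup>2 + Psi\<^sup>2 * exp (mesh n tt * Psi)) / 2"
  proof (rule exI[of _ "1::real"], intro conjI allI impI)
    show "(1::real) > 0" by simp
    fix s t n and tt :: "nat \<Rightarrow> real" and mu :: "nat \<Rightarrow> 'm"
    assume s0: "0 \<le> s" and st: "s \<le> t" and t0: "tt 0 = s" and tn: "tt n = t"
      and incr: "\<forall>j<n. tt j < tt (Suc j)" and meshR: "mesh n tt \<le> R" and muM: "\<forall>j\<in>{1..n}. mu j \<in> M"
    define rr where "rr j = tt (Suc j) - tt j" for j
    define fj where "fj j = f (mu (Suc j)) (rr j)" for j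
    define P where "P j = conv_list Delta delta (map fj [j..<n])" for j
    define T where "T j = E (t - tt j)" for j
    define d where "d j = nu c J H (\<lambda>y. P j y - T j y)" for j
    have rr_le: "rr j \<le> mesh n tt" if "j < n" for j
      unfolding mesh_def rr_def using that by (intro Max_ge) auto
    have rr_pos: "rr j > 0" if "j < n" for j using incr that by (simp add: rr_def)
    have rr_R: "rr j \<le> R" if "j < n" for j using rr_le[OF that] meshR by simp
    have muj: "mu (Suc j) \<in> M" if "j < n" for j using muM that by auto
    have Lfj: "L (fj j)" if "j < n" for j unfolding fj_def using f_lin muj rr_pos that by (simp add: less_imp_le)
    have LP: "L (P j)" for j unfolding P_def
      by (rule conv_list_L) (auto simp: Lfj)
    have LT: "L (T j)" for j unfolding T_def by (rule E_lin)
    have ttle: "tt j \<le> t" if "j \<le> n" for j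
      using that
    proof (induction j rule: inc_induct)
      case base then show ?case using tn by simp
    next
      case (step m) then show ?case using incr by (meson less_imp_le order_trans)
    qed
    have Pstep: "P j = conv Delta (fj j) (P (Suc j))" if "j < n" for j
      unfolding P_def using that by (simp add: upt_conv_Cons conv_list_Cons)
    have Tstep: "T j = conv Delta (E (rr j)) (T (Suc j))" for j
    proof
      fix y
      have "t - tt j = rr j + (t - tt (Suc j))" by (simp add: rr_def)
      then show "T j y = conv Delta (E (rr j)) (T (Suc j)) y" unfolding T_def
        by (simp only: E_semi[symmetric])
    qed
    define S where "S j = (\<Sum>i\<in>{j..<n}. (rr i)\<^sup>2)" for j
    have claim: "d j \<le> exp ((t - tt j) * \<Lambda>) * (W3 * K2) * S j" if "j \<le> n" for j
      using that
    proof (induction j rule: inc_induct)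
      case base
      have "(\<lambda>y. P n y - T n y) = (\<lambda>y. 0)"
        by (simp add: P_def T_def tn E_zero conv_list_def)
      then show ?case by (simp add: d_def nu_def S_def conv_nth)
    next
      case (step j)
      have jn: "j < n" using step by simp
      have eq: "(\<lambda>y. P j y - T j y) = (\<lambda>y. conv Delta (fj j) (\<lambda>z. P (Suc j) z - T (Suc j) z) y
               + conv Delta (\<lambda>z. fj j z - E (rr j) z) (T (Suc j)) y)"
        by (simp add: fun_eq_iff Pstep[OF jn] Tstep[of j] conv_diff1 conv_diff2)
      have "d j \<le> nu c J H (conv Delta (fj j) (\<lambda>z. P (Suc j) z - T (Suc j) z))
                 + nu c J H (conv Delta (\<lambda>z. fj j z - E (rr j) z) (T (Suc j)))"
        unfolding d_def eq by (rule nu_add)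
      also have "nu c J H (conv Delta (fj j) (\<lambda>z. P (Suc j) z - T (Suc j) z)) \<le> exp (rr j * \<Lambda>1) * d (Suc j)"
        unfolding d_def
        by (rule K4[OF r Lfj[OF jn] L_diff[OF LP LT]])
          (unfold fj_def, rule colf, use muj[OF jn] rr_pos[OF jn] rr_R[OF jn] in auto)
      also have "nu c J H (conv Delta (\<lambda>z. fj j z - E (rr j) z) (T (Suc j))) \<le> (rr j)\<^sup>2 * W3 * nu c J H (T (Suc j))"
        by (rule K4[OF r L_diff[OF Lfj[OF jn] E_lin] LT])
          (unfold fj_def, rule colfE, use muj[OF jn] rr_pos[OF jn] rr_R[OF jn] in auto)
      also have "nu c J H (T (Suc j)) \<le> K2 * exp ((t - tt (Suc j)) * \<Lambda>2)"
        unfolding T_def by (rule nuE) (use ttle[of "Suc j"] jn in simp)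
      finally have A: "d j \<le> exp (rr j * \<Lambda>1) * d (Suc j) + (rr j)\<^sup>2 * W3 * (K2 * exp ((t - tt (Suc j)) * \<Lambda>2))"
        using W30 by (simp add: mult_left_mono)
      define X where "X = exp ((t - tt (Suc j)) * \<Lambda>)"
      define Y where "Y = exp (rr j * \<Lambda>)"
      have tts: "t - tt (Suc j) \<ge> 0" using ttle[of "Suc j"] jn by simp
      have e1: "exp (rr j * \<Lambda>1) \<le> Y" unfolding Y_def \<Lambda>_def using rr_pos[OF jn]
        by (simp add: mult_left_mono)
      have e2: "exp ((t - tt (Suc j)) * \<Lambda>2) \<le> X" unfolding X_def \<Lambda>_def using tts
        by (simp add: mult_left_mono)
      have XY: "Y * X = exp ((t - tt j) * \<Lambda>)" unfolding X_def Y_def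
        by (simp add: exp_add[symmetric] rr_def algebra_simps)
      have Y1: "Y \<ge> 1" unfolding Y_def using rr_pos[OF jn] L0 by simp
      have X0: "X \<ge> 0" unfolding X_def by simp
      have d0: "d (Suc j) \<ge> 0" unfolding d_def by (rule nu_nonneg)
      have S0: "S (Suc j) \<ge> 0" unfolding S_def by (intro sum_nonneg) auto
      have Sj: "S j = (rr j)\<^sup>2 + S (Suc j)" unfolding S_def using jn
        by (simp add: sum.atLeast_Suc_lessThan)
      have "d j \<le> Y * d (Suc j) + (rr j)\<^sup>2 * W3 * (K2 * X)"
      proof -
        have "exp (rr j * \<Lambda>1) * d (Suc j) \<le> Y * d (Suc j)" by (rule mult_right_mono[OF e1 d0])
        moreover have "(rr j)\<^sup>2 * W3 * (K2 * exp ((t - tt (Suc j)) * \<Lambda>2)) \<le> (rr j)\<^sup>2 * W3 * (K2 * X)"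
          using e2 K20 W30 by (intro mult_left_mono) auto
        ultimately show ?thesis using A by linarith
      qed
      also have "\<dots> \<le> Y * (X * (W3 * K2) * S (Suc j)) + (rr j)\<^sup>2 * W3 * (K2 * (Y * X))"
      proof (rule add_mono)
        show "Y * d (Suc j) \<le> Y * (X * (W3 * K2) * S (Suc j))"
          using step.IH Y1 by (simp add: X_def)
        show "(rr j)\<^sup>2 * W3 * (K2 * X) \<le> (rr j)\<^sup>2 * W3 * (K2 * (Y * X))"
          using Y1 X0 W30 K20 by (intro mult_left_mono) (auto simp: mult_le_cancel_right1)
      qed
      also have "\<dots> = (Y * X) * (W3 * K2) * S j" by (simp add: Sj algebra_simps)
      finally show ?case using XY by simp
    qed
    have Sb: "S 0 \<le> mesh n tt * (t - s)"
    proof -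
      have "S 0 \<le> (\<Sum>i<n. mesh n tt * rr i)"
        unfolding S_def atLeast0LessThan
      proof (rule sum_mono)
        fix i assume "i \<in> {..<n}"
        then show "(rr i)\<^sup>2 \<le> mesh n tt * rr i"
          using rr_le[of i] rr_pos[of i] by (simp add: power2_eq_square mult_right_mono)
      qed
      also have "\<dots> = mesh n tt * (t - s)"
        by (simp add: sum_distrib_left[symmetric] rr_def sum_lessThan_telescope tn t0)
      finally show ?thesis .
    qed
    have "cmod (conv_list Delta delta (map (\<lambda>j. f (mu (Suc j)) (tt (Suc j) - tt j)) [0..<n]) c
                 - conv_exp Delta delta (\<lambda>x. complex_of_real (t - s) * psi x) c)
          = cmod (P 0 c - T 0 c)"
      unfolding conv_exp_E by (simp add: P_def T_def fj_def[abs_def] rr_def[abs_def] t0)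
    also have "\<dots> \<le> Kc * d 0" unfolding d_def Kc_def
      using K5[OF r L_diff[OF LP LT], of 0 0] by simp
    also have "\<dots> \<le> Kc * (exp ((t - s) * \<Lambda>) * (W3 * K2) * S 0)"
      using claim[of 0] t0 Kc0 by (simp add: mult_left_mono)
    also have "\<dots> \<le> Kc * (exp ((t - s) * \<Lambda>) * (W3 * K2) * (mesh n tt * (t - s)))"
      using Sb Kc0 W30 K20 by (intro mult_left_mono) auto
    finally have B: "cmod (conv_list Delta delta (map (\<lambda>j. f (mu (Suc j)) (tt (Suc j) - tt j)) [0..<n]) c
                 - conv_exp Delta delta (\<lambda>x. complex_of_real (t - s) * psi x) c)
         \<le> (Kc * W3 * K2) * exp ((t - s) * \<Lambda>) * (mesh n tt * (t - s))"
      by (simp add: ac_simps)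
    have mesh0: "mesh n tt \<ge> 0" unfolding mesh_def by (intro Max_ge) auto
    have c1: "Kc * W3 * K2 \<le> (Cc\<^sup>2 + 1\<^sup>2 * exp (mesh n tt * 1)) / 2"
    proof -
      have "Cc \<le> Cc\<^sup>2" using Cc1 by (simp add: power2_eq_square)
      moreover have "2 * (Kc * W3 * K2) \<le> Cc" using L0 by (simp add: Cc_def)
      moreover have "0 < exp (mesh n tt)" by simp
      ultimately have "Kc * W3 * K2 * 2 \<le> Cc\<^sup>2 + exp (mesh n tt)" by linarith
      then show ?thesis by simp
    qed
    have c2: "exp ((t - s) * \<Lambda>) \<le> exp ((t - s) * max 1 Cc)"
    proof -
      have p: "0 \<le> Kc * W3 * K2" using Kc0 W30 K20 by simp
      have "\<Lambda> \<le> Cc" using p by (simp add: Cc_def)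
      then have "\<Lambda> \<le> max 1 Cc" by simp
      then show ?thesis using st by (simp add: mult_left_mono)
    qed
    have "(Kc * W3 * K2) * exp ((t - s) * \<Lambda>) * (mesh n tt * (t - s))
         \<le> ((Cc\<^sup>2 + 1\<^sup>2 * exp (mesh n tt * 1)) / 2) * exp ((t - s) * max 1 Cc) * (mesh n tt * (t - s))"
      using c1 c2 mesh0 st Kc0 W30 K20
      by (intro mult_right_mono mult_mono) auto
    with B show "cmod (conv_list Delta delta (map (\<lambda>j. f (mu (Suc j)) (tt (Suc j) - tt j)) [0..<n]) c
                 - conv_exp Delta delta (\<lambda>x. complex_of_real (t - s) * psi x) c)
         \<le> mesh n tt * (t - s) * exp ((t - s) * max 1 Cc) * (Cc\<^sup>2 + 1\<^sup>2 * exp (mesh n tt * 1)) / 2"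
      by (simp add: ac_simps)
  qed
  qed
qed

end


theorem lemma4p2:
  fixes scl :: "complex \<Rightarrow> 'c::ab_group_add \<Rightarrow> 'c"
    and Delta :: "'c coprod" and delta :: "'c \<Rightarrow> complex"
    and R :: real and psi :: "'c \<Rightarrow> complex"
    and M :: "'m set" and f :: "'m \<Rightarrow> real \<Rightarrow> 'c \<Rightarrow> complex"
  assumes coalg: "coalgebra scl Delta delta"
    and R_pos: "R > 0"
    and psi_lin: "lin_fun scl psi"
    and f_lin: "\<And>\<mu> r. \<mu> \<in> M \<Longrightarrow> r \<ge> 0 \<Longrightarrow> lin_fun scl (f \<mu> r)"
    and remainder: "\<And>c. \<exists>D > 0. \<forall>\<mu>\<in>M. \<forall>r. 0 \<le> r \<longrightarrow> r \<le> R \<longrightarrow>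
                      cmod (f \<mu> r c - delta c - complex_of_real r * psi c) \<le> r\<^sup>2 * D"
  shows "\<forall>c. \<exists>Cc > 0. \<exists>Psi > 0. \<forall>s t n (tt :: nat \<Rightarrow> real) (mu :: nat \<Rightarrow> 'm).
           0 \<le> s \<longrightarrow> s \<le> t \<longrightarrow> tt 0 = s \<longrightarrow> tt n = t \<longrightarrow>
           (\<forall>j<n. tt j < tt (Suc j)) \<longrightarrow> mesh n tt \<le> R \<longrightarrow>
           (\<forall>j\<in>{1..n}. mu j \<in> M) \<longrightarrow>
           cmod (conv_list Delta delta
                   (map (\<lambda>j. f (mu (Suc j)) (tt (Suc j) - tt j)) [0..<n]) c
                 - conv_exp Delta delta (\<lambda>x. complex_of_real (t - s) * psi x) c)
           \<le> mesh n tt * (t - s) * exp ((t - s) * max Psi Cc)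
              * (Cc\<^sup>2 + Psi\<^sup>2 * exp (mesh n tt * Psi)) / 2"
proof -
  interpret coalp scl Delta delta psi
    using coalg psi_lin by (simp add: coalp_def coal_def coalp_axioms_def)
  show ?thesis
  proof
    fix c
    show "\<exists>Cc > 0. \<exists>Psi > 0. \<forall>s t n (tt :: nat \<Rightarrow> real) (mu :: nat \<Rightarrow> 'm).
           0 \<le> s \<longrightarrow> s \<le> t \<longrightarrow> tt 0 = s \<longrightarrow> tt n = t \<longrightarrow>
           (\<forall>j<n. tt j < tt (Suc j)) \<longrightarrow> mesh n tt \<le> R \<longrightarrow>
           (\<forall>j\<in>{1..n}. mu j \<in> M) \<longrightarrow>
           cmod (conv_list Delta delta
                   (map (\<lambda>j. f (mu (Suc j)) (tt (Suc j) - tt j)) [0..<n]) c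
                 - conv_exp Delta delta (\<lambda>x. complex_of_real (t - s) * psi x) c)
           \<le> mesh n tt * (t - s) * exp ((t - s) * max Psi Cc)
              * (Cc\<^sup>2 + Psi\<^sup>2 * exp (mesh n tt * Psi)) / 2"
      by (rule main[OF R_pos f_lin remainder])
  qed
qed

end
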